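(* Let $a,a^{+}$ be boson operators with $aa^{+}-a^{+}a=1$, let $m\in\mathbb{N}$, $r\ge0$, and let $\lambda$ be a nonzero real number. For all integers $l,n\ge0$, \[ (m\,a^{+}a+r)_{l+n,\lambda}=\sum_{j=0}^{l}\sum_{k=0}^{n}W^{(r)}_{m,\lambda}(l,j)\binom{n}{k}m^{j}(a^{+})^{j}(mj-l\lambda)_{n-k,\lambda}\,(m\,a^{+}a+r)_{k,\lambda}\,a^{j}. \]
   Context: For an operator or number $X$ and real $\lambda\neq0$, $(X)_{0,\lambda}=1$ and $(X)_{n,\lambda}=X(X-\lambda)\cdots(X-(n-1)\lambda)$ for $n\ge1$ (scalars mean multiples of the identity); $(x)_k=x(x-1)\cdots(x-k+1)$. For $m\in\mathbb{N}$ and $r\ge0$, the degenerate $r$-Whitney numbers of the second kind $W^{(r)}_{m,\lambda}(n,k)$ are defined by $(mx+r)_{n,\lambda}=\sum_{k=0}^{n}W^{(r)}_{m,\lambda}(n,k)m^{k}(x)_k$ ($n\ge0$). *)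

theory Defs
  imports Complex_Main
begin

fun dfall :: "'a::real_algebra_1 \<Rightarrow> nat \<Rightarrow> real \<Rightarrow> 'a" where
  "dfall X 0 lam = 1"
| "dfall X (Suc n) lam = dfall X n lam * (X - of_real (real n * lam))"

definition ffall :: "real \<Rightarrow> nat \<Rightarrow> real" where
  "ffall x k = (\<Prod>i<k. x - real i)"

text \<open>Degenerate r-Whitney numbers of the second kind, defined (as in the paper) as the
  coefficients in (m x + r)_{n,lambda} = sum_{k=0}^n W(n,k) m^k (x)_k for all x.
  (Uniquely determined when m > 0.)\<close>
definition whitney2 :: "nat \<Rightarrow> real \<Rightarrow> real \<Rightarrow> nat \<Rightarrow> nat \<Rightarrow> real" where
  "whitney2 m r lam n =
     (THE w. (\<forall>x::real. dfall (real m * x + r) n lam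
                 = (\<Sum>k\<le>n. w k * real m ^ k * ffall x k))
             \<and> (\<forall>k>n. w k = 0))"

end

theory Submission
  imports Defs
begin

lemma ofr: "of_real c = c *\<^sub>R (1::'a::real_algebra_1)" by (simp add: of_real_def)

lemma dfall_add: "dfall X (l + n) lam = dfall X l lam * dfall (X - of_real (real l * lam)) n lam"
  by (induction n) (simp_all add: algebra_simps mult.assoc)

lemma a_pow_ap:
  fixes a ap :: "'a::real_algebra_1"
  assumes boson: "a * ap - ap * a = 1"
  shows "a ^ Suc k * ap = ap * a ^ Suc k + real (Suc k) *\<^sub>R a ^ k"
proof (induction k)
  case 0 then show ?case using boson by (simp add: algebra_simps)
next
  case (Suc k)
  have b: "a * ap = ap * a + 1" using boson by (simp add: algebra_simps)
  have "a ^ Suc (Suc k) * ap = a * (a ^ Suc k * ap)" by (simp add: mult.assoc)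
  also have "\<dots> = a * (ap * a ^ Suc k + real (Suc k) *\<^sub>R a ^ k)" using Suc by simp
  also have "\<dots> = (a * ap) * a ^ Suc k + real (Suc k) *\<^sub>R a ^ Suc k"
    by (simp add: distrib_left mult.assoc)
  also have "\<dots> = ap * a ^ Suc (Suc k) + a ^ Suc k + real (Suc k) *\<^sub>R a ^ Suc k"
    unfolding b by (simp add: distrib_right mult.assoc)
  also have "\<dots> = ap * a ^ Suc (Suc k) + real (Suc (Suc k)) *\<^sub>R a ^ Suc k"
    by (simp only: of_nat_Suc[of "Suc k"] scaleR_add_left scaleR_one add.assoc add.commute[of "a ^ Suc k"])
  finally show ?case .
qed

lemma P_step:
  fixes a ap :: "'a::real_algebra_1"
  assumes boson: "a * ap - ap * a = 1"
  shows "(ap ^ k * a ^ k) * (ap * a) = ap ^ Suc k * a ^ Suc k + real k *\<^sub>R (ap ^ k * a ^ k)"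
proof (cases k)
  case 0 then show ?thesis by simp
next
  case (Suc k')
  have "(ap ^ k * a ^ k) * (ap * a) = ap ^ k * (a ^ Suc k' * ap) * a" using Suc by (simp add: mult.assoc)
  also have "\<dots> = ap ^ k * (ap * a ^ Suc k' + real (Suc k') *\<^sub>R a ^ k') * a"
    using a_pow_ap[OF boson] by simp
  also have "\<dots> = (ap ^ k * ap) * (a ^ Suc k' * a) + real (Suc k') *\<^sub>R (ap ^ k * (a ^ k' * a))"
    by (simp add: distrib_left distrib_right mult.assoc)
  also have "\<dots> = ap ^ Suc k * a ^ Suc k + real k *\<^sub>R (ap ^ k * a ^ k)"
    using Suc by (simp only: power_Suc2)
  finally show ?thesis .
qed

lemma comm_dfall:
  fixes b Y Z :: "'a::real_algebra_1"
  assumes "b * Y = Z * b"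
  shows "b * dfall Y n lam = dfall Z n lam * b"
proof (induction n)
  case 0 then show ?case by simp
next
  case (Suc n)
  have "b * dfall Y (Suc n) lam = (b * dfall Y n lam) * (Y - of_real (real n * lam))" by (simp add: mult.assoc)
  also have "\<dots> = dfall Z n lam * (b * (Y - of_real (real n * lam)))" using Suc by (simp add: mult.assoc)
  also have "b * (Y - of_real (real n * lam)) = (Z - of_real (real n * lam)) * b"
    using assms unfolding ofr by (simp add: right_diff_distrib left_diff_distrib)
  finally show ?case by (simp add: mult.assoc)
qed

lemma a_X:
  fixes a ap :: "'a::real_algebra_1"
  assumes boson: "a * ap - ap * a = 1"
  shows "a * (of_real m * ap * a + of_real s) = (of_real m * ap * a + of_real (s + m)) * a"
proof -
  have b: "a * ap = ap * a + 1" using boson by (simp add: algebra_simps)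
  have "a * (of_real m * ap * a + of_real s) = m *\<^sub>R ((a * ap) * a) + s *\<^sub>R a"
    unfolding ofr by (simp add: distrib_left mult.assoc)
  also have "\<dots> = m *\<^sub>R (ap * a * a) + (s + m) *\<^sub>R a"
    unfolding b by (simp add: distrib_right scaleR_add_right scaleR_add_left)
  also have "\<dots> = (of_real m * ap * a + of_real (s + m)) * a"
    unfolding ofr by (simp add: distrib_right mult.assoc)
  finally show ?thesis .
qed

lemma a_pow_X:
  fixes a ap :: "'a::real_algebra_1"
  assumes boson: "a * ap - ap * a = 1"
  shows "a ^ j * (of_real m * ap * a + of_real s) = (of_real m * ap * a + of_real (s + m * real j)) * a ^ j"
proof (induction j arbitrary: s)
  case 0 then show ?case by simp
next
  case (Suc j)
  have "a ^ Suc j * (of_real m * ap * a + of_real s) = a ^ j * (a * (of_real m * ap * a + of_real s))"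
    by (simp add: mult.assoc power_Suc2 del: power_Suc)
  also have "\<dots> = a ^ j * (of_real m * ap * a + of_real (s + m)) * a"
    using a_X[OF boson] by (simp add: mult.assoc)
  also have "\<dots> = (of_real m * ap * a + of_real (s + m * real (Suc j))) * a ^ Suc j"
    using Suc[of "s + m"] by (simp add: mult.assoc power_Suc2 algebra_simps del: power_Suc)
  finally show ?case .
qed

fun W :: "nat \<Rightarrow> real \<Rightarrow> real \<Rightarrow> nat \<Rightarrow> nat \<Rightarrow> real" where
  "W m r lam 0 k = (if k = 0 then 1 else 0)"
| "W m r lam (Suc n) k = (case k of 0 \<Rightarrow> 0 | Suc i \<Rightarrow> W m r lam n i)
      + (real m * real k + r - real n * lam) * W m r lam n k"

lemma W_zero: "k > n \<Longrightarrow> W m r lam n k = 0"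
  by (induction n arbitrary: k) (auto split: nat.splits)

lemma dfall_expand:
  fixes N :: "'a::real_algebra_1" and P :: "nat \<Rightarrow> 'a"
  assumes P0: "P 0 = 1" and PS: "\<And>k. P k * N = P (Suc k) + real k *\<^sub>R P k"
  shows "dfall (of_real (real m) * N + of_real r) l lam = (\<Sum>j\<le>l. (W m r lam l j * real m ^ j) *\<^sub>R P j)"
proof (induction l)
  case 0 then show ?case using P0 by simp
next
  case (Suc l)
  have "dfall (of_real (real m) * N + of_real r) (Suc l) lam
      = (\<Sum>j\<le>l. (W m r lam l j * real m ^ j) *\<^sub>R P j) * (real m *\<^sub>R N + (r - real l * lam) *\<^sub>R 1)"
    using Suc by (simp add: ofr scaleR_diff_left add_diff_eq)
  also have "\<dots> = (\<Sum>j\<le>l. (W m r lam l j * real m ^ j) *\<^sub>R (real m *\<^sub>R (P j * N) + (r - real l * lam) *\<^sub>R P j))"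
    by (simp add: sum_distrib_right distrib_left scaleR_add_right sum.distrib scaleR_sum_right mult.commute mult.left_commute)
  also have "\<dots> = (\<Sum>j\<le>l. (W m r lam l j * real m ^ Suc j) *\<^sub>R P (Suc j))
     + (\<Sum>j\<le>l. ((real m * real j + r - real l * lam) * W m r lam l j * real m ^ j) *\<^sub>R P j)"
    unfolding PS by (simp add: sum.distrib[symmetric] scaleR_add_right algebra_simps)
  also have "(\<Sum>j\<le>l. (W m r lam l j * real m ^ Suc j) *\<^sub>R P (Suc j))
     = (\<Sum>j\<le>Suc l. ((case j of 0 \<Rightarrow> 0 | Suc i \<Rightarrow> W m r lam l i) * real m ^ j) *\<^sub>R P j)"
    by (simp only: sum.atMost_Suc_shift) simp
  also have "(\<Sum>j\<le>l. ((real m * real j + r - real l * lam) * W m r lam l j * real m ^ j) *\<^sub>R P j)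
     = (\<Sum>j\<le>Suc l. ((real m * real j + r - real l * lam) * W m r lam l j * real m ^ j) *\<^sub>R P j)"
    by (simp add: W_zero)
  finally show ?case by (simp add: sum.distrib[symmetric] scaleR_add_left distrib_right)
qed

lemma ffall_Suc: "ffall x (Suc k) = ffall x k * (x - real k)"
  by (simp add: ffall_def)

lemma W_real: "dfall (real m * x + r) l lam = (\<Sum>j\<le>l. W m r lam l j * real m ^ j * ffall x j)"
  using dfall_expand[of "ffall x" x m r l lam] by (simp add: ffall_def algebra_simps)

lemma ffall_gt: "k < i \<Longrightarrow> ffall (real k) i = 0"
  unfolding ffall_def by (rule prod_zero) auto

lemma ffall_self: "ffall (real k) k \<noteq> 0"
  unfolding ffall_def by (simp add: prod_zero_iff)

lemma uniq_aux:
  fixes d :: "nat \<Rightarrow> real"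
  assumes h: "\<And>x. (\<Sum>k\<le>n. d k * ffall x k) = 0"
  shows "k \<le> n \<Longrightarrow> d k = 0"
proof (induction k rule: less_induct)
  case (less k)
  have "(\<Sum>i\<le>n. d i * ffall (real k) i) = d k * ffall (real k) k + (\<Sum>i\<in>{..n}-{k}. d i * ffall (real k) i)"
    using less.prems by (subst sum.remove[of _ k]) auto
  also have "(\<Sum>i\<in>{..n}-{k}. d i * ffall (real k) i) = 0"
  proof (rule sum.neutral, intro ballI)
    fix i assume i: "i \<in> {..n}-{k}"
    show "d i * ffall (real k) i = 0"
    proof (cases "i < k")
      case True then show ?thesis using less.IH[of i] less.prems by simp
    next
      case False then show ?thesis using i ffall_gt[of k i] by simp
    qed
  qed
  finally have "d k * ffall (real k) k = 0" using h[of "real k"] by simp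
  then show ?case using ffall_self[of k] by simp
qed

lemma whitney2_eq:
  assumes m: "m > 0"
  shows "whitney2 m r lam n = W m r lam n"
  unfolding whitney2_def
proof (rule the_equality)
  show "(\<forall>x. dfall (real m * x + r) n lam = (\<Sum>k\<le>n. W m r lam n k * real m ^ k * ffall x k)) \<and> (\<forall>k>n. W m r lam n k = 0)"
    using W_real W_zero by blast
next
  fix w assume H: "(\<forall>x. dfall (real m * x + r) n lam = (\<Sum>k\<le>n. w k * real m ^ k * ffall x k)) \<and> (\<forall>k>n. w k = 0)"
  have "\<And>x. (\<Sum>k\<le>n. ((w k - W m r lam n k) * real m ^ k) * ffall x k) = 0"
    using H W_real by (simp add: algebra_simps sum_subtractf)
  then have "\<And>k. k \<le> n \<Longrightarrow> (w k - W m r lam n k) * real m ^ k = 0"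
    by (rule uniq_aux)
  then show "w = W m r lam n"
    using m H W_zero by (auto intro!: ext) (metis not_le)
qed

lemma dfall_binom:
  fixes Y :: "'a::real_algebra_1"
  shows "dfall (Y + of_real s) n lam = (\<Sum>k\<le>n. (real (n choose k) * dfall s (n - k) lam) *\<^sub>R dfall Y k lam)"
proof (induction n)
  case 0 then show ?case by simp
next
  case (Suc n)
  define A where "A k = dfall Y k lam" for k
  define D where "D k = dfall s k lam" for k
  have tm: "(real (n choose k) * D (n - k)) *\<^sub>R A k * (Y + of_real s - of_real (real n * lam))
      = (real (n choose k) * D (n - k)) *\<^sub>R A (Suc k) + (real (n choose k) * D (Suc n - k)) *\<^sub>R A k"
    if "k \<le> n" for k
  proof -
    have e: "Y + of_real s - of_real (real n * lam) = (Y - of_real (real k * lam)) + (s - real (n - k) * lam) *\<^sub>R 1"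
      using that by (simp add: ofr of_nat_diff algebra_simps)
    have d: "D (Suc n - k) = D (n - k) * (s - real (n - k) * lam)"
      using that by (simp add: D_def Suc_diff_le)
    show ?thesis unfolding e d by (simp add: A_def distrib_left)
  qed
  have "dfall (Y + of_real s) (Suc n) lam
      = (\<Sum>k\<le>n. (real (n choose k) * D (n - k)) *\<^sub>R A k * (Y + of_real s - of_real (real n * lam)))"
    using Suc by (simp add: A_def D_def sum_distrib_right)
  also have "\<dots> = (\<Sum>k\<le>n. (real (n choose k) * D (n - k)) *\<^sub>R A (Suc k))
      + (\<Sum>k\<le>n. (real (n choose k) * D (Suc n - k)) *\<^sub>R A k)"
    by (simp only: sum.distrib[symmetric]) (rule sum.cong[OF refl], rule tm, simp)
  also have "(\<Sum>k\<le>n. (real (n choose k) * D (Suc n - k)) *\<^sub>R A k)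
      = (\<Sum>k\<le>Suc n. (real (n choose k) * D (Suc n - k)) *\<^sub>R A k)"
    by simp
  also have "\<dots> = (real (n choose 0) * D (Suc n)) *\<^sub>R A 0 + (\<Sum>k\<le>n. (real (n choose Suc k) * D (n - k)) *\<^sub>R A (Suc k))"
    by (simp only: sum.atMost_Suc_shift) simp
  also have "(\<Sum>k\<le>n. (real (n choose k) * D (n - k)) *\<^sub>R A (Suc k)) + ((real (n choose 0) * D (Suc n)) *\<^sub>R A 0 + (\<Sum>k\<le>n. (real (n choose Suc k) * D (n - k)) *\<^sub>R A (Suc k)))
     = (real (Suc n choose 0) * D (Suc n)) *\<^sub>R A 0 + (\<Sum>k\<le>n. (real (Suc n choose Suc k) * D (Suc n - Suc k)) *\<^sub>R A (Suc k))"
    by (simp add: sum.distrib[symmetric] scaleR_add_left distrib_right)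
  also have "\<dots> = (\<Sum>k\<le>Suc n. (real (Suc n choose k) * D (Suc n - k)) *\<^sub>R A k)"
    by (simp only: sum.atMost_Suc_shift diff_zero)
  finally show ?case by (simp add: A_def D_def)
qed

theorem mainTheorem8:
  fixes a ap :: "'a::real_algebra_1"
    and m :: nat and r lam :: real and l n :: nat
  assumes boson: "a * ap - ap * a = 1"
    and m_pos: "m > 0"
    and r_nonneg: "r \<ge> 0"
    and lam_nz: "lam \<noteq> 0"
  shows "dfall (of_real (real m) * ap * a + of_real r) (l + n) lam
    = (\<Sum>j\<le>l. \<Sum>k\<le>n.
         of_real (whitney2 m r lam l j * real (n choose k) * real m ^ j)
         * ap ^ j
         * of_real (dfall (real m * real j - real l * lam) (n - k) lam)
         * dfall (of_real (real m) * ap * a + of_real r) k lam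
         * a ^ j)"
proof -
  define X where "X = of_real (real m) * ap * a + of_real r"
  define c where "c j = W m r lam l j * real m ^ j" for j
  define s where "s j = real m * real j - real l * lam" for j
  have 1: "dfall X (l + n) lam = dfall X l lam * dfall (X - of_real (real l * lam)) n lam"
    by (rule dfall_add)
  have 2: "dfall X l lam = (\<Sum>j\<le>l. c j *\<^sub>R (ap ^ j * a ^ j))"
    unfolding X_def c_def mult.assoc[of "of_real (real m)" ap a]
    by (rule dfall_expand) (simp_all add: P_step[OF boson])
  have 3: "a ^ j * dfall (X - of_real (real l * lam)) n lam = dfall (X + of_real (s j)) n lam * a ^ j" for j
  proof (rule comm_dfall)
    have e1: "X - of_real (real l * lam) = of_real (real m) * ap * a + of_real (r - real l * lam)"
      unfolding X_def by (simp add: of_real_diff)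
    have e2: "X + of_real (s j) = of_real (real m) * ap * a + of_real (r - real l * lam + real m * real j)"
      unfolding X_def s_def by (simp add: of_real_add of_real_diff algebra_simps)
    show "a ^ j * (X - of_real (real l * lam)) = (X + of_real (s j)) * a ^ j"
      by (simp only: e1 e2 a_pow_X[OF boson])
  qed
  have "dfall X (l + n) lam = (\<Sum>j\<le>l. c j *\<^sub>R (ap ^ j * (a ^ j * dfall (X - of_real (real l * lam)) n lam)))"
    unfolding 1 2 by (simp add: sum_distrib_right mult.assoc)
  also have "\<dots> = (\<Sum>j\<le>l. c j *\<^sub>R (ap ^ j * (\<Sum>k\<le>n. (real (n choose k) * dfall (s j) (n - k) lam) *\<^sub>R dfall X k lam) * a ^ j))"
    unfolding 3 dfall_binom by (simp add: mult.assoc)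
  also have "\<dots> = (\<Sum>j\<le>l. \<Sum>k\<le>n. (c j * (real (n choose k) * dfall (s j) (n - k) lam)) *\<^sub>R (ap ^ j * (dfall X k lam * a ^ j)))"
    by (simp add: sum_distrib_left sum_distrib_right scaleR_sum_right mult.assoc)
  also have "\<dots> = (\<Sum>j\<le>l. \<Sum>k\<le>n.
         of_real (whitney2 m r lam l j * real (n choose k) * real m ^ j)
         * ap ^ j
         * of_real (dfall (real m * real j - real l * lam) (n - k) lam)
         * dfall X k lam
         * a ^ j)"
    unfolding whitney2_eq[OF m_pos] c_def s_def
    by (intro sum.cong refl) (simp add: ofr mult.assoc mult_ac)
  finally show ?thesis unfolding X_def .
qed

end
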